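(* Suppose that for every $c\in\{1,\dots,K-1\}$, $$\bar p_c(\bm x,\bar Y)=\binom{K-1}{c}^{-1}\sum_{y\notin \bar Y}p(\bm x,y)\qquad(\bm x\in\mathcal X,\ \bar Y\in\overline{\mathcal Y}_c),$$ and let $\pi_1,\dots,\pi_{K-1}\ge0$ with $\sum_c\pi_c=1$. Let $\bar p$ be the density on $\mathcal X\times\overline{\mathcal Y}$, $\overline{\mathcal Y}=\bigcup_{c=1}^{K-1}\overline{\mathcal Y}_c$, given by $\bar p(\bm x,\bar Y)=\pi_c\,\bar p_c(\bm x,\bar Y)$ whenever $|\bar Y|=c$, and let $\bar p(\bm x)$ be its marginal on $\mathcal X$. Put $\lambda=(K-1)/\sum_{c=1}^{K-1}c\,\pi_c$ and let $\gamma\in[0,1]$. Then for any loss $\ell$ and decision function $\bm g$ (with finite expectations), $$R(\bm g)=\mathbb E_{\bar p(\bm x,\bar Y)}\Big[\mathcal L(\bm g(\bm x))-\lambda\sum_{y\in\bar Y}\ell(\bm g(\bm x),y)\Big]$$ and $$R(\bm g)=\mathbb E_{\bar p(\bm x,\bar Y)}\Big[(1-\gamma)\mathcal L(\bm g(\bm x))-\lambda\sum_{y\in\bar Y}\ell(\bm g(\bm x),y)\Big]+\gamma\,\mathbb E_{\bar p(\bm x)}\big[\mathcal L(\bm g(\bm x))\big].$$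
   Context: Let $K\ge 2$, $\mathcal X\subseteq\mathbb R^d$ the feature space and $\mathcal Y=\{1,\dots,K\}$ the label space. Let $p(\bm x,y)$ be a joint density on $\mathcal X\times\mathcal Y$ with marginal density $p(\bm x)$. For $c\in\{1,\dots,K-1\}$, $\overline{\mathcal Y}_c$ denotes the collection of all $c$-element subsets of $\{1,\dots,K\}$, and $\bar p_c(\bm x,\bar Y)$ is a density on $\mathcal X\times\overline{\mathcal Y}_c$. A decision function is a map $\bm g:\mathcal X\to\mathbb R^K$, a loss is a function $\ell:\mathbb R^K\times\mathcal Y\to[0,\infty)$, the classification risk is $R(\bm g)=\mathbb E_{p(\bm x,y)}[\ell(\bm g(\bm x),y)]$, and the cumulative loss is $\mathcal L(\bm g(\bm x))=\sum_{y=1}^K\ell(\bm g(\bm x),y)$. *)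

theory Defs
  imports "HOL-Analysis.Analysis"
begin

text \<open>Labels form a finite type 'k with K = CARD('k); features live in X \<subseteq> real^'d;
 densities are w.r.t. Lebesgue measure restricted to X.\<close>

definition Ybar_c :: "nat \<Rightarrow> 'k::finite set set" where
  "Ybar_c c = {Y. card Y = c}"

definition Ybar :: "'k::finite set set" where
  "Ybar = (\<Union>c\<in>{1..CARD('k) - 1}. Ybar_c c)"

definition cum_loss :: "(real^'k \<Rightarrow> 'k::finite \<Rightarrow> real) \<Rightarrow> real^'k \<Rightarrow> real" where
  "cum_loss loss v = (\<Sum>y\<in>UNIV. loss v y)"

definition risk :: "(real^'d) set \<Rightarrow> (real^'d \<Rightarrow> 'k::finite \<Rightarrow> real) \<Rightarrow>
    (real^'k \<Rightarrow> 'k \<Rightarrow> real) \<Rightarrow> (real^'d \<Rightarrow> real^'k) \<Rightarrow> real" where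
  "risk X p loss g = (\<Sum>y\<in>UNIV. (LINT x:X|lborel. loss (g x) y * p x y))"

definition pbar :: "(nat \<Rightarrow> real) \<Rightarrow> (nat \<Rightarrow> real^'d \<Rightarrow> 'k::finite set \<Rightarrow> real) \<Rightarrow>
    real^'d \<Rightarrow> 'k set \<Rightarrow> real" where
  "pbar \<pi> pc x Y = \<pi> (card Y) * pc (card Y) x Y"

definition pbar_marg :: "(nat \<Rightarrow> real) \<Rightarrow> (nat \<Rightarrow> real^'d \<Rightarrow> 'k::finite set \<Rightarrow> real) \<Rightarrow>
    real^'d \<Rightarrow> real" where
  "pbar_marg \<pi> pc x = (\<Sum>Y\<in>(Ybar::'k set set). pbar \<pi> pc x Y)"

definition exp_bar :: "(real^'d) set \<Rightarrow> (real^'d \<Rightarrow> 'k::finite set \<Rightarrow> real) \<Rightarrow>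
    (real^'d \<Rightarrow> 'k set \<Rightarrow> real) \<Rightarrow> real" where
  "exp_bar X q f = (\<Sum>Y\<in>(Ybar::'k set set). (LINT x:X|lborel. f x Y * q x Y))"

definition exp_marg :: "(real^'d) set \<Rightarrow> (real^'d \<Rightarrow> real) \<Rightarrow> (real^'d \<Rightarrow> real) \<Rightarrow> real" where
  "exp_marg X q h = (LINT x:X|lborel. h x * q x)"

end

theory Submission
  imports Defs
begin


lemma sum_Ybar: "(\<Sum>Y\<in>(Ybar::'k::finite set set). F Y) = (\<Sum>c=1..CARD('k)-1. \<Sum>Y\<in>Ybar_c c. F Y)"
  unfolding Ybar_def by (rule sum.UNION_disjoint) (auto simp: Ybar_c_def)

lemma card_avoid: fixes y :: "'k::finite"
  shows "card {Y\<in>Ybar_c c. y \<notin> Y} = (CARD('k) - 1) choose c"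
proof -
  have "{Y\<in>Ybar_c c. y \<notin> Y} = {Y. Y \<subseteq> UNIV - {y} \<and> card Y = c}" by (auto simp: Ybar_c_def)
  moreover have "card (UNIV - {y}) = CARD('k) - 1" by simp
  ultimately show ?thesis using n_subsets[of "UNIV - {y}" c] by simp
qed

lemma card_in_avoid: fixes y y' :: "'k::finite"
  assumes "y' \<noteq> y" "c \<ge> 1"
  shows "card {Y\<in>Ybar_c c. y \<notin> Y \<and> y' \<in> Y} = (CARD('k) - 2) choose (c - 1)"
proof -
  let ?Z = "{Z. Z \<subseteq> UNIV - {y,y'} \<and> card Z = c - 1}"
  have eq: "{Y\<in>Ybar_c c. y \<notin> Y \<and> y' \<in> Y} = insert y' ` ?Z"
  proof (intro equalityI subsetI)
    fix Y assume Y: "Y \<in> {Y\<in>Ybar_c c. y \<notin> Y \<and> y' \<in> Y}"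
    then have "Y = insert y' (Y - {y'})" "Y - {y'} \<in> ?Z" using assms by (auto simp: Ybar_c_def)
    then show "Y \<in> insert y' ` ?Z" by blast
  next
    fix Y assume "Y \<in> insert y' ` ?Z"
    then obtain Z where Z: "Z \<in> ?Z" "Y = insert y' Z" by blast
    then have "y' \<notin> Z" by auto
    then have "card Y = c" using Z assms by (simp add: card_insert_if)
    then show "Y \<in> {Y\<in>Ybar_c c. y \<notin> Y \<and> y' \<in> Y}" using Z assms by (auto simp: Ybar_c_def)
  qed
  have inj: "inj_on (insert y') ?Z"
    by (rule inj_onI) (metis Diff_insert_absorb mem_Collect_eq subset_Diff_insert)
  have c2: "card (UNIV - {y,y'}) = CARD('k) - 2" using assms by (simp add: card_Diff_subset)
  show ?thesis unfolding eq card_image[OF inj] using n_subsets[of "UNIV - {y,y'}" "c-1"] c2 by simp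
qed

lemma sum_as_UNIV: "(\<Sum>y\<in>A. f y) = (\<Sum>y\<in>(UNIV::'k::finite set). if y \<in> A then f y else (0::real))"
  using sum.inter_filter[of UNIV f "\<lambda>y. y \<in> A"] by simp

lemma comb1: fixes p :: "'k::finite \<Rightarrow> real"
  shows "(\<Sum>Y\<in>Ybar_c c. \<Sum>y\<in>UNIV - Y. p y) = real ((CARD('k) - 1) choose c) * (\<Sum>y\<in>UNIV. p y)"
proof -
  have "(\<Sum>Y\<in>Ybar_c c. \<Sum>y\<in>UNIV - Y. p y) = (\<Sum>Y\<in>Ybar_c c. \<Sum>y\<in>UNIV. if y \<notin> Y then p y else 0)"
    by (subst sum_as_UNIV) simp
  also have "\<dots> = (\<Sum>y\<in>UNIV. \<Sum>Y\<in>Ybar_c c. if y \<notin> Y then p y else 0)" by (rule sum.swap)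
  also have "\<dots> = (\<Sum>y\<in>UNIV. p y * real (card {Y\<in>Ybar_c c. y \<notin> Y}))"
    by (rule sum.cong[OF refl]) (simp add: sum.inter_filter[symmetric] Ybar_c_def)
  also have "\<dots> = real ((CARD('k) - 1) choose c) * (\<Sum>y\<in>UNIV. p y)"
    by (simp add: card_avoid sum_distrib_right mult.commute)
  finally show ?thesis .
qed

lemma comb2: fixes p l :: "'k::finite \<Rightarrow> real"
  assumes "c \<ge> 1"
  shows "(\<Sum>Y\<in>Ybar_c c. \<Sum>y\<in>UNIV - Y. \<Sum>y'\<in>Y. l y' * p y) =
    real ((CARD('k) - 2) choose (c - 1)) * ((\<Sum>y\<in>UNIV. \<Sum>y'\<in>UNIV. l y' * p y) - (\<Sum>y\<in>UNIV. l y * p y))"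
proof -
  let ?B = "real ((CARD('k) - 2) choose (c - 1))"
  have "(\<Sum>Y\<in>Ybar_c c. \<Sum>y\<in>UNIV - Y. \<Sum>y'\<in>Y. l y' * p y) =
     (\<Sum>Y\<in>Ybar_c c. \<Sum>y\<in>UNIV. \<Sum>y'\<in>UNIV. if y \<notin> Y \<and> y' \<in> Y then l y' * p y else 0)"
  proof (rule sum.cong[OF refl])
    fix Y :: "'k set"
    have "(\<Sum>y\<in>UNIV - Y. \<Sum>y'\<in>Y. l y' * p y) = (\<Sum>y\<in>UNIV. if y \<notin> Y then (\<Sum>y'\<in>Y. l y' * p y) else 0)"
      by (subst sum_as_UNIV) simp
    also have "\<dots> = (\<Sum>y\<in>UNIV. \<Sum>y'\<in>UNIV. if y \<notin> Y \<and> y' \<in> Y then l y' * p y else 0)"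
      by (rule sum.cong[OF refl]) (auto simp: sum_as_UNIV[where A=Y])
    finally show "(\<Sum>y\<in>UNIV - Y. \<Sum>y'\<in>Y. l y' * p y) = (\<Sum>y\<in>UNIV. \<Sum>y'\<in>UNIV. if y \<notin> Y \<and> y' \<in> Y then l y' * p y else 0)" .
  qed
  also have "\<dots> = (\<Sum>y\<in>UNIV. \<Sum>y'\<in>UNIV. \<Sum>Y\<in>Ybar_c c. if y \<notin> Y \<and> y' \<in> Y then l y' * p y else 0)"
    by (subst sum.swap, rule sum.cong[OF refl], rule sum.swap)
  also have "\<dots> = (\<Sum>y\<in>UNIV. \<Sum>y'\<in>UNIV. l y' * p y * real (card {Y\<in>Ybar_c c. y \<notin> Y \<and> y' \<in> Y}))"
    by (intro sum.cong refl) (simp add: sum.inter_filter[symmetric] Ybar_c_def)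
  also have "\<dots> = (\<Sum>y\<in>UNIV. \<Sum>y'\<in>UNIV. if y' = y then 0 else ?B * (l y' * p y))"
  proof (intro sum.cong refl)
    fix y y' :: 'k
    show "l y' * p y * real (card {Y\<in>Ybar_c c. y \<notin> Y \<and> y' \<in> Y}) = (if y' = y then 0 else ?B * (l y' * p y))"
      using card_in_avoid[of y' y c, OF _ assms] by (cases "y' = y") auto
  qed
  also have "\<dots> = (\<Sum>y\<in>UNIV. ?B * ((\<Sum>y'\<in>UNIV. l y' * p y) - l y * p y))"
  proof (rule sum.cong[OF refl])
    fix y :: 'k
    have "(\<Sum>y'\<in>UNIV. if y' = y then 0 else ?B * (l y' * p y)) = (\<Sum>y'\<in>UNIV - {y}. ?B * (l y' * p y))"
      by (simp add: sum.If_cases Diff_eq Compl_eq)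
    also have "\<dots> = ?B * ((\<Sum>y'\<in>UNIV. l y' * p y) - l y * p y)"
      by (simp add: sum_diff1 sum_distrib_left[symmetric])
    finally show "(\<Sum>y'\<in>UNIV. if y' = y then 0 else ?B * (l y' * p y)) = ?B * ((\<Sum>y'\<in>UNIV. l y' * p y) - l y * p y)" .
  qed
  also have "\<dots> = ?B * ((\<Sum>y\<in>UNIV. \<Sum>y'\<in>UNIV. l y' * p y) - (\<Sum>y\<in>UNIV. l y * p y))"
    by (simp add: sum_distrib_left[symmetric] sum_subtractf)
  finally show ?thesis .
qed

lemma binom_ratio:
  assumes "c \<ge> 1" "c \<le> CARD('k::finite) - 1"
  shows "real ((CARD('k) - 2) choose (c - 1)) / real ((CARD('k) - 1) choose c) = real c / real (CARD('k) - 1)"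
proof -
  have "c * ((CARD('k) - 1) choose c) = (CARD('k) - 1) * ((CARD('k) - 1 - 1) choose (c - 1))"
    using times_binomial_minus1_eq[of c "CARD('k) - 1"] assms by simp
  then have e: "real c * real ((CARD('k) - 1) choose c) = real (CARD('k) - 1) * real ((CARD('k) - 2) choose (c - 1))"
    by (metis diff_diff_left one_add_one of_nat_mult)
  have "((CARD('k) - 1) choose c) > 0" using assms by simp
  moreover have "CARD('k) - 1 > 0" using assms by simp
  ultimately show ?thesis using e by (simp add: field_simps)
qed

lemma comb_inner:
  fixes p l :: "'k::finite \<Rightarrow> real"
  assumes c: "c \<ge> 1" "c \<le> CARD('k) - 1"
  shows "(\<Sum>Y\<in>Ybar_c c. (\<pi> (card Y) / real ((CARD('k) - 1) choose card Y)) *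
        (\<Sum>y\<in>UNIV - Y. \<alpha> * (\<Sum>y'\<in>UNIV. l y' * p y) - lam * (\<Sum>y'\<in>Y. l y' * p y)))
      = \<pi> c * \<alpha> * (\<Sum>y\<in>UNIV. \<Sum>y'\<in>UNIV. l y' * p y)
        - lam * \<pi> c * (real c / real (CARD('k) - 1)) * ((\<Sum>y\<in>UNIV. \<Sum>y'\<in>UNIV. l y' * p y) - (\<Sum>y\<in>UNIV. l y * p y))"
proof -
  let ?C = "real ((CARD('k) - 1) choose c)"
  let ?B = "real ((CARD('k) - 2) choose (c - 1))"
  let ?T = "(\<Sum>y\<in>UNIV. \<Sum>y'\<in>UNIV. l y' * p y)"
  let ?D = "(\<Sum>y\<in>UNIV. l y * p y)"
  have Cpos: "?C > 0" using c by simp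
  have "(\<Sum>Y\<in>Ybar_c c. (\<pi> (card Y) / real ((CARD('k) - 1) choose card Y)) *
        (\<Sum>y\<in>UNIV - Y. \<alpha> * (\<Sum>y'\<in>UNIV. l y' * p y) - lam * (\<Sum>y'\<in>Y. l y' * p y)))
     = (\<Sum>Y\<in>Ybar_c c. (\<pi> c / ?C) *
        (\<alpha> * (\<Sum>y\<in>UNIV - Y. (\<Sum>y'\<in>UNIV. l y' * p y)) - lam * (\<Sum>y\<in>UNIV - Y. \<Sum>y'\<in>Y. l y' * p y)))"
    by (rule sum.cong[OF refl]) (simp add: Ybar_c_def sum_subtractf sum_distrib_left)
  also have "\<dots> = (\<pi> c / ?C) * (\<alpha> * (\<Sum>Y\<in>Ybar_c c. \<Sum>y\<in>UNIV - Y. (\<Sum>y'\<in>UNIV. l y' * p y))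
       - lam * (\<Sum>Y\<in>Ybar_c c. \<Sum>y\<in>UNIV - Y. \<Sum>y'\<in>Y. l y' * p y))"
    by (simp only: sum_distrib_left right_diff_distrib sum_subtractf)
  also have "\<dots> = (\<pi> c / ?C) * (\<alpha> * (?C * ?T) - lam * (?B * (?T - ?D)))"
    by (simp only: comb1 comb2[OF c(1)])
  also have "\<dots> = \<pi> c * \<alpha> * ?T - lam * \<pi> c * (?B / ?C) * (?T - ?D)"
    using Cpos by (simp add: field_simps)
  finally have X: "(\<Sum>Y\<in>Ybar_c c. (\<pi> (card Y) / real ((CARD('k) - 1) choose card Y)) *
        (\<Sum>y\<in>UNIV - Y. \<alpha> * (\<Sum>y'\<in>UNIV. l y' * p y) - lam * (\<Sum>y'\<in>Y. l y' * p y)))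
      = \<pi> c * \<alpha> * ?T - lam * \<pi> c * (?B / ?C) * (?T - ?D)" .
  show ?thesis unfolding X binom_ratio[OF c] ..
qed

lemma sum_aux: fixes T D K :: real
  shows "(\<Sum>c\<in>A. \<pi> c * \<alpha> * T - lam * \<pi> c * (real c / K) * (T - D))
    = \<alpha> * T * (\<Sum>c\<in>A. \<pi> c) - (lam / K) * (T - D) * (\<Sum>c\<in>A. real c * \<pi> c)"
  by (simp add: sum_subtractf sum_distrib_left sum_distrib_right mult_ac)

lemma comb_main:
  fixes p l :: "'k::finite \<Rightarrow> real"
  assumes K2: "CARD('k) \<ge> 2"
    and pi_nonneg: "\<And>c. c \<in> {1..CARD('k) - 1} \<Longrightarrow> \<pi> c \<ge> 0"
    and pi_sum: "(\<Sum>c=1..CARD('k) - 1. \<pi> c) = 1"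
    and lam: "lam = real (CARD('k) - 1) / (\<Sum>c=1..CARD('k) - 1. real c * \<pi> c)"
  shows "(\<Sum>Y\<in>(Ybar::'k set set). (\<pi> (card Y) / real ((CARD('k) - 1) choose card Y)) *
        (\<Sum>y\<in>UNIV - Y. \<alpha> * (\<Sum>y'\<in>UNIV. l y' * p y) - lam * (\<Sum>y'\<in>Y. l y' * p y)))
      = (\<alpha> - 1) * (\<Sum>y\<in>UNIV. \<Sum>y'\<in>UNIV. l y' * p y) + (\<Sum>y\<in>UNIV. l y * p y)"
proof -
  let ?T = "(\<Sum>y\<in>UNIV. \<Sum>y'\<in>UNIV. l y' * p y)"
  let ?D = "(\<Sum>y\<in>UNIV. l y * p y)"
  let ?S = "(\<Sum>c=1..CARD('k) - 1. real c * \<pi> c)"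
  let ?K = "real (CARD('k) - 1)"
  have "?S \<ge> (\<Sum>c=1..CARD('k) - 1. \<pi> c)"
  proof (rule sum_mono)
    fix c assume c: "c \<in> {1..CARD('k) - 1}"
    then have "1 \<le> real c" by simp
    then have "1 * \<pi> c \<le> real c * \<pi> c" by (rule mult_right_mono) (use pi_nonneg c in auto)
    then show "\<pi> c \<le> real c * \<pi> c" by simp
  qed
  then have Spos: "?S > 0" using pi_sum by simp
  have Kpos: "?K > 0" using K2 by simp
  have "(\<Sum>Y\<in>(Ybar::'k set set). (\<pi> (card Y) / real ((CARD('k) - 1) choose card Y)) *
        (\<Sum>y\<in>UNIV - Y. \<alpha> * (\<Sum>y'\<in>UNIV. l y' * p y) - lam * (\<Sum>y'\<in>Y. l y' * p y)))
    = (\<Sum>c=1..CARD('k)-1. \<pi> c * \<alpha> * ?T - lam * \<pi> c * (real c / ?K) * (?T - ?D))"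
    unfolding sum_Ybar by (rule sum.cong[OF refl]) (rule comb_inner, auto)
  also have "\<dots> = \<alpha> * ?T * (\<Sum>c=1..CARD('k)-1. \<pi> c) - (lam / ?K) * (?T - ?D) * ?S"
    by (rule sum_aux)
  also have "\<dots> = (\<alpha> - 1) * ?T + ?D"
    using Spos Kpos unfolding pi_sum lam by (simp add: field_simps)
  finally show ?thesis .
qed

lemma comb_marg:
  fixes p :: "'k::finite \<Rightarrow> real"
  assumes pi_sum: "(\<Sum>c=1..CARD('k) - 1. \<pi> c) = 1"
  shows "(\<Sum>Y\<in>(Ybar::'k set set). (\<pi> (card Y) / real ((CARD('k) - 1) choose card Y)) * (\<Sum>y\<in>UNIV - Y. p y))
     = (\<Sum>y\<in>UNIV. p y)"
proof -
  have "(\<Sum>Y\<in>(Ybar::'k set set). (\<pi> (card Y) / real ((CARD('k) - 1) choose card Y)) * (\<Sum>y\<in>UNIV - Y. p y))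
     = (\<Sum>c=1..CARD('k)-1. \<pi> c * (\<Sum>y\<in>UNIV. p y))"
    unfolding sum_Ybar
  proof (rule sum.cong[OF refl])
    fix c assume c: "c \<in> {1..CARD('k) - 1}"
    have "(\<Sum>Y\<in>Ybar_c c. (\<pi> (card Y) / real ((CARD('k) - 1) choose card Y)) * (\<Sum>y\<in>UNIV - Y. p y))
       = (\<pi> c / real ((CARD('k) - 1) choose c)) * (\<Sum>Y\<in>Ybar_c c. \<Sum>y\<in>UNIV - Y. p y)"
      by (simp add: Ybar_c_def sum_distrib_left)
    also have "\<dots> = \<pi> c * (\<Sum>y\<in>UNIV. p y)" using c by (simp add: comb1)
    finally show "(\<Sum>Y\<in>Ybar_c c. (\<pi> (card Y) / real ((CARD('k) - 1) choose card Y)) * (\<Sum>y\<in>UNIV - Y. p y))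
       = \<pi> c * (\<Sum>y\<in>UNIV. p y)" .
  qed
  also have "\<dots> = (\<Sum>c=1..CARD('k)-1. \<pi> c) * (\<Sum>y\<in>UNIV. p y)" by (simp add: sum_distrib_right)
  also have "\<dots> = (\<Sum>y\<in>UNIV. p y)" by (simp only: pi_sum mult_1)
  finally show ?thesis .
qed

theorem theorem5:
  fixes X :: "(real^'d) set"
    and p :: "real^'d \<Rightarrow> 'k::finite \<Rightarrow> real"
    and pc :: "nat \<Rightarrow> real^'d \<Rightarrow> 'k set \<Rightarrow> real"
    and \<pi> :: "nat \<Rightarrow> real"
    and loss :: "real^'k \<Rightarrow> 'k \<Rightarrow> real"
    and g :: "real^'d \<Rightarrow> real^'k"
    and \<gamma> :: real
  assumes K2: "CARD('k) \<ge> 2"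
    and X_meas: "X \<in> sets lborel"
    and p_meas: "\<And>y. (\<lambda>x. p x y) \<in> borel_measurable lborel"
    and p_nonneg: "\<And>x y. x \<in> X \<Longrightarrow> p x y \<ge> 0"
    and p_total: "(\<Sum>y\<in>UNIV. (LINT x:X|lborel. p x y)) = 1"
    and p_int: "\<And>y. set_integrable lborel X (\<lambda>x. p x y)"
    and pc_def: "\<And>c x Y. c \<in> {1..CARD('k) - 1} \<Longrightarrow> x \<in> X \<Longrightarrow> Y \<in> Ybar_c c \<Longrightarrow>
        pc c x Y = (\<Sum>y\<in>UNIV - Y. p x y) / real (CARD('k) - 1 choose c)"
    and pi_nonneg: "\<And>c. c \<in> {1..CARD('k) - 1} \<Longrightarrow> \<pi> c \<ge> 0"
    and pi_sum: "(\<Sum>c=1..CARD('k) - 1. \<pi> c) = 1"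
    and loss_nonneg: "\<And>v y. loss v y \<ge> 0"
    and finite_exp: "\<And>y y'. set_integrable lborel X (\<lambda>x. loss (g x) y' * p x y)"
    and gamma: "0 \<le> \<gamma>" "\<gamma> \<le> 1"
  shows "let lam = real (CARD('k) - 1) / (\<Sum>c=1..CARD('k) - 1. real c * \<pi> c) in
      risk X p loss g = exp_bar X (pbar \<pi> pc)
          (\<lambda>x Y. cum_loss loss (g x) - lam * (\<Sum>y\<in>Y. loss (g x) y))
    \<and> risk X p loss g = exp_bar X (pbar \<pi> pc)
          (\<lambda>x Y. (1 - \<gamma>) * cum_loss loss (g x) - lam * (\<Sum>y\<in>Y. loss (g x) y))
        + \<gamma> * exp_marg X (pbar_marg \<pi> pc) (\<lambda>x. cum_loss loss (g x))"
proof -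
  define lam where "lam = real (CARD('k) - 1) / (\<Sum>c=1..CARD('k) - 1. real c * \<pi> c)"
  define q where "q x y = indicator X x * p x y" for x y
  define b where "b y' y x = loss (g x) y' * q x y" for y' y x
  have Ymem: "card Y \<in> {1..CARD('k) - 1} \<and> Y \<in> Ybar_c (card Y)" if "Y \<in> Ybar" for Y :: "'k set"
    using that by (auto simp: Ybar_def Ybar_c_def)
  have bint: "integrable lborel (\<lambda>x. b y' y x)" for y' y
  proof -
    have "integrable lborel (\<lambda>x. indicator X x *\<^sub>R (loss (g x) y' * p x y))"
      using finite_exp[of y' y] unfolding set_integrable_def .
    then show ?thesis by (simp add: b_def q_def mult_ac)
  qed
  have EB: "exp_bar X (pbar \<pi> pc) (\<lambda>x Y. \<alpha> * cum_loss loss (g x) - lam * (\<Sum>y\<in>Y. loss (g x) y))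
     = (\<alpha> - 1) * (\<Sum>y\<in>UNIV. \<Sum>y'\<in>UNIV. integral\<^sup>L lborel (\<lambda>x. b y' y x))
       + (\<Sum>y\<in>UNIV. integral\<^sup>L lborel (\<lambda>x. b y y x))" for \<alpha>
  proof -
    define lin where "lin Y x = (\<pi> (card Y) / real ((CARD('k) - 1) choose card Y)) *
        (\<Sum>y\<in>UNIV - Y. \<alpha> * (\<Sum>y'\<in>UNIV. b y' y x) - lam * (\<Sum>y'\<in>Y. b y' y x))" for Y x
    have lin_int: "integrable lborel (\<lambda>x. lin Y x)" for Y
      unfolding lin_def by (intro Bochner_Integration.integrable_mult_right Bochner_Integration.integrable_sum Bochner_Integration.integrable_diff bint)
    have step1: "(LINT x:X|lborel. (\<alpha> * cum_loss loss (g x) - lam * (\<Sum>y\<in>Y. loss (g x) y)) * pbar \<pi> pc x Y)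
        = integral\<^sup>L lborel (\<lambda>x. lin Y x)" if Y: "Y \<in> Ybar" for Y
      unfolding set_lebesgue_integral_def
    proof (rule Bochner_Integration.integral_cong[OF refl])
      fix x
      show "indicator X x *\<^sub>R ((\<alpha> * cum_loss loss (g x) - lam * (\<Sum>y\<in>Y. loss (g x) y)) * pbar \<pi> pc x Y) = lin Y x"
      proof (cases "x \<in> X")
        case True
        have pc: "pc (card Y) x Y = (\<Sum>y\<in>UNIV - Y. p x y) / real (CARD('k) - 1 choose card Y)"
          using pc_def Ymem[OF Y] True by blast
        have e: "(\<alpha> * cum_loss loss (g x) - lam * (\<Sum>y\<in>Y. loss (g x) y)) * (\<Sum>y\<in>UNIV - Y. p x y)
          = (\<Sum>y\<in>UNIV - Y. \<alpha> * (\<Sum>y'\<in>UNIV. loss (g x) y' * p x y) - lam * (\<Sum>y'\<in>Y. loss (g x) y' * p x y))"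
          by (subst sum_distrib_left, rule sum.cong[OF refl], simp add: cum_loss_def sum_distrib_right left_diff_distrib mult.assoc)
        show ?thesis using True unfolding lin_def b_def q_def pbar_def pc
          by (simp flip: e)
      next
        case False
        then show ?thesis by (simp add: lin_def b_def q_def)
      qed
    qed
    have "exp_bar X (pbar \<pi> pc) (\<lambda>x Y. \<alpha> * cum_loss loss (g x) - lam * (\<Sum>y\<in>Y. loss (g x) y))
        = (\<Sum>Y\<in>Ybar. integral\<^sup>L lborel (\<lambda>x. lin Y x))"
      unfolding exp_bar_def by (rule sum.cong[OF refl]) (rule step1)
    also have "\<dots> = integral\<^sup>L lborel (\<lambda>x. \<Sum>Y\<in>Ybar. lin Y x)"
      by (rule Bochner_Integration.integral_sum[symmetric]) (rule lin_int)
    also have "\<dots> = integral\<^sup>L lborel (\<lambda>x. (\<alpha> - 1) * (\<Sum>y\<in>UNIV. \<Sum>y'\<in>UNIV. b y' y x) + (\<Sum>y\<in>UNIV. b y y x))"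
    proof (rule Bochner_Integration.integral_cong[OF refl])
      fix x
      show "(\<Sum>Y\<in>Ybar. lin Y x) = (\<alpha> - 1) * (\<Sum>y\<in>UNIV. \<Sum>y'\<in>UNIV. b y' y x) + (\<Sum>y\<in>UNIV. b y y x)"
        unfolding lin_def b_def
        by (rule comb_main[where l="\<lambda>y'. loss (g x) y'" and p="q x" and \<alpha>=\<alpha>, OF K2 pi_nonneg pi_sum lam_def])
    qed
    also have "\<dots> = (\<alpha> - 1) * (\<Sum>y\<in>UNIV. \<Sum>y'\<in>UNIV. integral\<^sup>L lborel (\<lambda>x. b y' y x))
       + (\<Sum>y\<in>UNIV. integral\<^sup>L lborel (\<lambda>x. b y y x))"
      by (simp add: bint Bochner_Integration.integral_sum Bochner_Integration.integrable_sum)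
    finally show ?thesis .
  qed
  have R: "risk X p loss g = (\<Sum>y\<in>UNIV. integral\<^sup>L lborel (\<lambda>x. b y y x))"
    unfolding risk_def set_lebesgue_integral_def
    by (intro sum.cong refl Bochner_Integration.integral_cong) (simp add: b_def q_def mult_ac)
  have M: "exp_marg X (pbar_marg \<pi> pc) (\<lambda>x. cum_loss loss (g x))
     = (\<Sum>y\<in>UNIV. \<Sum>y'\<in>UNIV. integral\<^sup>L lborel (\<lambda>x. b y' y x))"
  proof -
    have "exp_marg X (pbar_marg \<pi> pc) (\<lambda>x. cum_loss loss (g x))
        = integral\<^sup>L lborel (\<lambda>x. \<Sum>y\<in>UNIV. \<Sum>y'\<in>UNIV. b y' y x)"
      unfolding exp_marg_def set_lebesgue_integral_def
    proof (rule Bochner_Integration.integral_cong[OF refl])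
      fix x
      show "indicator X x *\<^sub>R (cum_loss loss (g x) * pbar_marg \<pi> pc x) = (\<Sum>y\<in>UNIV. \<Sum>y'\<in>UNIV. b y' y x)"
      proof (cases "x \<in> X")
        case True
        have "pbar_marg \<pi> pc x = (\<Sum>Y\<in>(Ybar::'k set set). (\<pi> (card Y) / real ((CARD('k) - 1) choose card Y)) * (\<Sum>y\<in>UNIV - Y. p x y))"
          unfolding pbar_marg_def pbar_def
          by (rule sum.cong[OF refl]) (use pc_def Ymem True in auto)
        also have "\<dots> = (\<Sum>y\<in>UNIV. p x y)" by (rule comb_marg[OF pi_sum])
        finally have pm: "pbar_marg \<pi> pc x = (\<Sum>y\<in>UNIV. p x y)" .
        show ?thesis using True unfolding pm b_def q_def cum_loss_def
          by (simp add: sum_distrib_left sum_distrib_right mult_ac) (rule sum.swap)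
      next
        case False
        then show ?thesis by (simp add: b_def q_def)
      qed
    qed
    also have "\<dots> = (\<Sum>y\<in>UNIV. \<Sum>y'\<in>UNIV. integral\<^sup>L lborel (\<lambda>x. b y' y x))"
      by (simp add: bint Bochner_Integration.integral_sum Bochner_Integration.integrable_sum)
    finally show ?thesis .
  qed
  have E1: "exp_bar X (pbar \<pi> pc) (\<lambda>x Y. cum_loss loss (g x) - lam * (\<Sum>y\<in>Y. loss (g x) y))
      = risk X p loss g"
    using EB[of 1] R by simp
  have E2: "exp_bar X (pbar \<pi> pc) (\<lambda>x Y. (1 - \<gamma>) * cum_loss loss (g x) - lam * (\<Sum>y\<in>Y. loss (g x) y))
        + \<gamma> * exp_marg X (pbar_marg \<pi> pc) (\<lambda>x. cum_loss loss (g x)) = risk X p loss g"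
    using EB[of "1 - \<gamma>"] R M by (simp add: algebra_simps)
  show ?thesis unfolding Let_def lam_def[symmetric] using E1 E2 by simp
qed

end
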